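(* Let $\mathcal{X}$ be a finite set, let $H:\mathcal{X}^2\to\mathbb{R}$ be any function and let $r\in\mathcal{P}_+(\mathcal{X})$. Then there exist functions $\kappa:\mathcal{X}\to\mathbb{R}$ and $\delta:\mathcal{X}\to\mathbb{R}$ such that the function \[ w(y|x) = \exp\bigl(H(x,y)+\kappa(y)-\kappa(x)-\delta(y)\bigr),\qquad (x,y)\in\mathcal{X}^2, \] is a Markov kernel on $\mathcal{X}$ whose stationary distribution is $r$, i.e. $\sum_{x\in\mathcal{X}} r(x)w(y|x)=r(y)$ for all $y\in\mathcal{X}$. Moreover, $\delta$ is uniquely determined, and $\kappa$ is unique up to an additive constant.
   Context: $\mathcal{P}_+(\mathcal{X})$ denotes the set of strictly positive probability distributions on the finite set $\mathcal{X}$ (functions $r:\mathcal{X}\to(0,\infty)$ with $\sum_x r(x)=1$). A Markov kernel on $\mathcal{X}$ is a function $w:\mathcal{X}^2\to[0,\infty)$, written $w(y|x)$, with $\sum_{y\in\mathcal{X}}w(y|x)=1$ for every $x\in\mathcal{X}$. A distribution $p$ is a stationary distribution of $w$ if $\sum_x w(y|x)p(x)=p(y)$ for all $y$; a strictly positive Markov kernel has a unique stationary distribution. *)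

theory Defs
  imports "HOL-Analysis.Analysis"
begin

definition pos_distribution :: "('x::finite \<Rightarrow> real) \<Rightarrow> bool" where
  "pos_distribution r \<longleftrightarrow> (\<forall>x. r x > 0) \<and> (\<Sum>x\<in>UNIV. r x) = 1"

text \<open>Markov kernel, written w y x for w(y|x).\<close>
definition markov_kernel :: "('x::finite \<Rightarrow> 'x \<Rightarrow> real) \<Rightarrow> bool" where
  "markov_kernel w \<longleftrightarrow> (\<forall>x y. w y x \<ge> 0) \<and> (\<forall>x. (\<Sum>y\<in>UNIV. w y x) = 1)"

definition stationary_dist :: "('x::finite \<Rightarrow> 'x \<Rightarrow> real) \<Rightarrow> ('x \<Rightarrow> real) \<Rightarrow> bool" where
  "stationary_dist w p \<longleftrightarrow> (\<forall>y. (\<Sum>x\<in>UNIV. w y x * p x) = p y)"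

definition tilt_kernel :: "('x \<Rightarrow> 'x \<Rightarrow> real) \<Rightarrow> ('x \<Rightarrow> real) \<Rightarrow> ('x \<Rightarrow> real) \<Rightarrow> 'x \<Rightarrow> 'x \<Rightarrow> real" where
  "tilt_kernel H \<kappa> \<delta> y x = exp (H x y + \<kappa> y - \<kappa> x - \<delta> y)"

end

theory Submission
  imports Defs
begin

lemma tilt_factor:
  "tilt_kernel H k' d' y x = tilt_kernel H k d y x * exp ((k' y - k y) - (d' y - d y)) * exp (-(k' x - k x))"
  unfolding tilt_kernel_def by (simp add: mult_exp_exp algebra_simps)

lemma uniq:
  fixes H :: "'x::finite \<Rightarrow> 'x \<Rightarrow> real" and r :: "'x \<Rightarrow> real"
  assumes r: "pos_distribution r"
    and m: "markov_kernel (tilt_kernel H k d)" and s: "stationary_dist (tilt_kernel H k d) r"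
    and m': "markov_kernel (tilt_kernel H k' d')" and s': "stationary_dist (tilt_kernel H k' d') r"
  shows "d' = d \<and> (\<exists>c. \<forall>x. k' x = k x + c)"
proof -
  define w where "w = tilt_kernel H k d"
  define q where "q y = exp ((k' y - k y) - (d' y - d y))" for y
  define p where "p x = exp (-(k' x - k x))" for x
  have wpos: "w y x > 0" for y x unfolding w_def tilt_kernel_def by simp
  have rpos: "r x > 0" for x using r unfolding pos_distribution_def by auto
  have qpos: "q y > 0" for y unfolding q_def by simp
  have ppos: "p x > 0" for x unfolding p_def by simp
  have w': "tilt_kernel H k' d' y x = w y x * q y * p x" for x y
    unfolding w_def q_def p_def by (rule tilt_factor)
  have wrow: "(\<Sum>y\<in>UNIV. w y x) = 1" for x using m unfolding w_def markov_kernel_def by auto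
  have wcol: "(\<Sum>x\<in>UNIV. w y x * r x) = r y" for y using s unfolding w_def stationary_dist_def by auto
  have row: "p x * (\<Sum>y\<in>UNIV. w y x * q y) = 1" for x
  proof -
    have "1 = (\<Sum>y\<in>UNIV. tilt_kernel H k' d' y x)" using m' unfolding markov_kernel_def by auto
    also have "\<dots> = p x * (\<Sum>y\<in>UNIV. w y x * q y)"
      by (simp add: w' sum_distrib_left algebra_simps)
    finally show ?thesis by simp
  qed
  have col: "q y * (\<Sum>x\<in>UNIV. w y x * r x * p x) = r y" for y
  proof -
    have "r y = (\<Sum>x\<in>UNIV. tilt_kernel H k' d' y x * r x)" using s' unfolding stationary_dist_def by auto
    also have "\<dots> = q y * (\<Sum>x\<in>UNIV. w y x * r x * p x)"
      by (simp add: w' sum_distrib_left algebra_simps)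
    finally show ?thesis by simp
  qed
  obtain y0 where y0: "\<And>y. q y0 \<le> q y"
  proof -
    have "Min (range q) \<in> range q" by (rule Min_in) auto
    then obtain y0 where "q y0 = Min (range q)" by (metis rangeE)
    then have "q y0 \<le> q y" for y using Min_le[of "range q" "q y"] by simp
    then show ?thesis by (rule that)
  qed
  obtain x0 where x0: "\<And>x. p x \<le> p x0"
  proof -
    have "Max (range p) \<in> range p" by (rule Max_in) auto
    then obtain x0 where "p x0 = Max (range p)" by (metis rangeE)
    then have "p x \<le> p x0" for x using Max_ge[of "range p" "p x"] by simp
    then show ?thesis by (rule that)
  qed
  have le1: "p x * q y0 \<le> 1" for x
  proof -
    have "q y0 = (\<Sum>y\<in>UNIV. w y x * q y0)" using wrow[of x] by (simp add: sum_distrib_right[symmetric])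
    also have "\<dots> \<le> (\<Sum>y\<in>UNIV. w y x * q y)"
      by (rule sum_mono) (use wpos y0 in \<open>auto intro: mult_left_mono less_imp_le\<close>)
    finally have "p x * q y0 \<le> p x * (\<Sum>y\<in>UNIV. w y x * q y)" using ppos[of x] by simp
    then show ?thesis using row[of x] by simp
  qed
  have ge1: "p x0 * q y0 \<ge> 1"
  proof -
    have "(\<Sum>x\<in>UNIV. w y0 x * r x * p x) \<le> (\<Sum>x\<in>UNIV. w y0 x * r x * p x0)"
      by (rule sum_mono) (use wpos rpos x0 in \<open>auto intro: mult_left_mono less_imp_le\<close>)
    also have "\<dots> = r y0 * p x0" using wcol[of y0] by (simp add: sum_distrib_right[symmetric])
    finally have "r y0 \<le> q y0 * (r y0 * p x0)" using col[of y0] qpos[of y0]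
      by (metis mult_left_mono less_imp_le)
    then have "r y0 * 1 \<le> r y0 * (p x0 * q y0)" by (simp add: algebra_simps)
    then show ?thesis using rpos[of y0] by simp
  qed
  have eq1: "p x0 * q y0 = 1" using le1[of x0] ge1 by simp
  have qconst: "q y = q y0" for y
  proof -
    have "p x0 * (\<Sum>y\<in>UNIV. w y x0 * q y0) = 1" using eq1 wrow[of x0]
      by (simp add: sum_distrib_right[symmetric])
    with row[of x0] have "(\<Sum>y\<in>UNIV. w y x0 * q y) = (\<Sum>y\<in>UNIV. w y x0 * q y0)"
      using ppos[of x0] by (metis mult_cancel_left order_less_irrefl)
    then have "(\<Sum>y\<in>UNIV. w y x0 * (q y - q y0)) = 0"
      by (simp add: right_diff_distrib sum_subtractf)
    moreover have "\<forall>y\<in>UNIV. 0 \<le> w y x0 * (q y - q y0)" using wpos y0 by (simp add: less_imp_le)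
    ultimately have "\<forall>y\<in>UNIV. w y x0 * (q y - q y0) = 0" by (simp add: sum_nonneg_eq_0_iff)
    then have "w y x0 * (q y - q y0) = 0" by blast
    then show ?thesis using wpos[of y x0] by (metis eq_iff_diff_eq_0 mult_eq_0_iff less_irrefl)
  qed
  have pq: "p x * q y = 1" for x y
  proof -
    have "(\<Sum>y\<in>UNIV. w y x * q y) = (\<Sum>y\<in>UNIV. w y x * q y0)"
      by (rule sum.cong[OF refl]) (metis qconst)
    then have "p x * (\<Sum>y\<in>UNIV. w y x * q y0) = 1" using row[of x] by simp
    then have "p x * q y0 = 1" using wrow[of x] by (simp add: sum_distrib_right[symmetric])
    then show ?thesis by (subst qconst)
  qed
  have key: "-(k' x - k x) + ((k' y - k y) - (d' y - d y)) = 0" for x y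
  proof -
    have "exp (-(k' x - k x) + ((k' y - k y) - (d' y - d y))) = 1"
      using pq[of x y] unfolding p_def q_def by (simp only: exp_add)
    then show ?thesis by simp
  qed
  have "d' y = d y" for y using key[of y y] by linarith
  then have "d' = d" by (rule ext)
  moreover have "k' x = k x + (k' x0 - k x0)" for x using key[of x x0] key[of x0 x0] by linarith
  ultimately show ?thesis by blast
qed

lemma fixpt:
  fixes E :: "'x::finite \<Rightarrow> 'x \<Rightarrow> real" and r :: "'x \<Rightarrow> real"
  assumes Epos: "\<And>x y. E x y > 0" and rpos: "\<And>x. r x > 0" and rsum: "(\<Sum>x\<in>UNIV. r x) = 1"
  shows "\<exists>b. (\<forall>y. b y > 0) \<and> (\<forall>y. b y * (\<Sum>x\<in>UNIV. r x * E x y / (\<Sum>z\<in>UNIV. E x z * b z)) = r y)"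
proof -
  define S where "S = {v :: real^'x. (\<forall>i. 0 \<le> v$i) \<and> (\<Sum>i\<in>UNIV. v$i) = 1}"
  define Sb where "Sb v x = (\<Sum>z\<in>UNIV. E x z * v$z)" for v :: "real^'x" and x
  define G where "G v y = (\<Sum>x\<in>UNIV. r x * E x y / Sb v x)" for v y
  define T where "T v y = r y / G v y" for v y
  define F where "F v = (\<chi> y. T v y / (\<Sum>y'\<in>UNIV. T v y'))" for v
  have Sbpos: "Sb v x > 0" if "v \<in> S" for v x
  proof -
    from that have nn: "\<forall>i. 0 \<le> v$i" and s1: "(\<Sum>i\<in>UNIV. v$i) = 1" unfolding S_def by auto
    obtain z where "v$z \<noteq> 0" using s1 by (metis (no_types) sum.neutral zero_neq_one)
    then have "v$z > 0" using nn by (simp add: order_le_neq_trans)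
    then have "E x z * v$z > 0" using Epos by simp
    show ?thesis unfolding Sb_def
    proof (rule sum_pos2[of UNIV z])
      show "\<And>i. i \<in> UNIV \<Longrightarrow> 0 \<le> E x i * v $ i"
        using nn Epos by (simp add: less_imp_le)
    qed (use \<open>E x z * v$z > 0\<close> in auto)
  qed
  have Gpos: "G v y > 0" if "v \<in> S" for v y
    unfolding G_def using Sbpos[OF that] rpos Epos
    by (intro sum_pos) auto
  have Tpos: "T v y > 0" if "v \<in> S" for v y
    unfolding T_def using Gpos[OF that] rpos by simp
  have STpos: "(\<Sum>y'\<in>UNIV. T v y') > 0" if "v \<in> S" for v
    using Tpos[OF that] by (intro sum_pos) auto
  have FS: "F v \<in> S" if "v \<in> S" for v
  proof -
    have "(\<Sum>i\<in>UNIV. F v $ i) = (\<Sum>i\<in>UNIV. T v i) / (\<Sum>y'\<in>UNIV. T v y')"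
      unfolding F_def vec_lambda_beta by (rule sum_divide_distrib[symmetric])
    also have "\<dots> = 1" using STpos[OF that] by simp
    finally have s: "(\<Sum>i\<in>UNIV. F v $ i) = 1" .
    have "0 \<le> F v $ i" for i unfolding F_def
      using Tpos[OF that, of i] STpos[OF that] by simp
    with s show ?thesis unfolding S_def by blast
  qed
  have cont: "continuous_on S F"
  proof -
    have cSb: "continuous_on S (\<lambda>v. Sb v x)" for x unfolding Sb_def by (intro continuous_intros)
    have cG: "continuous_on S (\<lambda>v. G v y)" for y unfolding G_def
      by (intro continuous_intros cSb) (use Sbpos in \<open>auto simp: less_imp_neq[symmetric]\<close>)
    have cT: "continuous_on S (\<lambda>v. T v y)" for y unfolding T_def
      by (intro continuous_intros cG) (use Gpos in \<open>auto simp: less_imp_neq[symmetric]\<close>)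
    show ?thesis unfolding F_def
      by (intro continuous_intros cT) (use STpos in \<open>auto simp: less_imp_neq[symmetric]\<close>)
  qed
  have closedS: "closed S"
  proof -
    have "S = {v. \<forall>i. 0 \<le> v$i} \<inter> {v. (\<Sum>i\<in>UNIV. v$i) = 1}" unfolding S_def by auto
    moreover have "closed {v :: real^'x. \<forall>i. 0 \<le> v$i}"
      by (intro closed_Collect_all closed_Collect_le continuous_intros)
    moreover have "closed {v :: real^'x. (\<Sum>i\<in>UNIV. v$i) = 1}"
      by (intro closed_Collect_eq continuous_intros)
    ultimately show ?thesis by auto
  qed
  have boundedS: "bounded S"
  proof (rule bounded_subset[OF bounded_cbox[of 0 1]])
    show "S \<subseteq> cbox 0 1"
    proof
      fix v assume v: "v \<in> S"
      have "v$i \<le> 1" for i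
      proof -
        have "v$i \<le> (\<Sum>i\<in>UNIV. v$i)" by (rule member_le_sum) (use v in \<open>auto simp: S_def\<close>)
        then show ?thesis using v by (simp add: S_def)
      qed
      then show "v \<in> cbox 0 1" using v by (auto simp: mem_box_cart S_def)
    qed
  qed
  have convS: "convex S"
    unfolding convex_def S_def
    by (auto simp: sum.distrib sum_distrib_left[symmetric])
  have neS: "S \<noteq> {}"
  proof -
    have "(\<chi> i. 1 / real CARD('x)) \<in> S" unfolding S_def by simp
    then show ?thesis by auto
  qed
  obtain v where vS: "v \<in> S" and fv: "F v = v"
    using brouwer[OF compact_eq_bounded_closed[THEN iffD2] convS neS cont] closedS boundedS FS
    by (metis Pi_I)
  define L where "L = (\<Sum>y'\<in>UNIV. T v y')"
  have Lpos: "L > 0" unfolding L_def using STpos[OF vS] .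
  have vy: "v$y = T v y / L" for y using fv unfolding F_def L_def by (metis vec_lambda_beta)
  have vpos: "v$y > 0" for y using vy Tpos[OF vS] Lpos by simp
  have vG: "v$y * G v y = r y / L" for y
    using vy[of y] Gpos[OF vS, of y] unfolding T_def by (simp add: field_simps)
  have "(\<Sum>y\<in>UNIV. v$y * G v y) = (\<Sum>y\<in>UNIV. \<Sum>x\<in>UNIV. r x / Sb v x * (E x y * v$y))"
    unfolding G_def by (simp add: sum_distrib_left algebra_simps)
  also have "\<dots> = (\<Sum>x\<in>UNIV. r x / Sb v x * Sb v x)"
  proof (subst sum.swap, rule sum.cong[OF refl])
    fix x
    show "(\<Sum>y\<in>UNIV. r x / Sb v x * (E x y * v$y)) = r x / Sb v x * Sb v x"
      unfolding Sb_def by (rule sum_distrib_left[symmetric])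
  qed
  also have "\<dots> = (\<Sum>x\<in>UNIV. r x)"
    by (rule sum.cong[OF refl]) (use Sbpos[OF vS] in \<open>simp add: less_imp_neq[symmetric]\<close>)
  also have "\<dots> = 1" by (rule rsum)
  finally have "(\<Sum>y\<in>UNIV. r y / L) = 1" using vG by simp
  then have "1 / L = 1" using rsum by (simp add: sum_divide_distrib[symmetric])
  then have L1: "L = 1" by (simp add: field_simps)
  show ?thesis
    by (rule exI[of _ "\<lambda>y. v$y"]) (use vpos vG L1 in \<open>simp add: G_def Sb_def\<close>)
qed

lemma exist:
  fixes H :: "'x::finite \<Rightarrow> 'x \<Rightarrow> real" and r :: "'x \<Rightarrow> real"
  assumes r: "pos_distribution r"
  shows "\<exists>k d. markov_kernel (tilt_kernel H k d) \<and> stationary_dist (tilt_kernel H k d) r"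
proof -
  have rpos: "r x > 0" for x using r unfolding pos_distribution_def by auto
  have rsum: "(\<Sum>x\<in>UNIV. r x) = 1" using r unfolding pos_distribution_def by auto
  obtain b where bpos: "\<And>y. b y > 0"
    and bG: "\<And>y. b y * (\<Sum>x\<in>UNIV. r x * exp (H x y) / (\<Sum>z\<in>UNIV. exp (H x z) * b z)) = r y"
    using fixpt[of "\<lambda>x y. exp (H x y)" r] rpos rsum by auto
  define Sb where "Sb x = (\<Sum>z\<in>UNIV. exp (H x z) * b z)" for x
  have Sbpos: "Sb x > 0" for x unfolding Sb_def using bpos by (intro sum_pos) auto
  define k where "k x = ln (Sb x)" for x
  define d where "d y = k y - ln (b y)" for y
  have tk: "tilt_kernel H k d y x = exp (H x y) * b y / Sb x" for x y
  proof -
    have "H x y + k y - k x - d y = H x y + ln (b y) - ln (Sb x)" unfolding d_def k_def by simp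
    then have "tilt_kernel H k d y x = exp (H x y + ln (b y) - ln (Sb x))"
      unfolding tilt_kernel_def by simp
    also have "\<dots> = exp (H x y) * b y / Sb x"
      using bpos[of y] Sbpos[of x] by (simp only: exp_diff exp_add exp_ln)
    finally show ?thesis .
  qed
  have "markov_kernel (tilt_kernel H k d)"
    unfolding markov_kernel_def
  proof (intro conjI allI)
    fix x y show "0 \<le> tilt_kernel H k d y x" unfolding tilt_kernel_def by simp
  next
    fix x
    have "(\<Sum>y\<in>UNIV. tilt_kernel H k d y x) = (\<Sum>y\<in>UNIV. exp (H x y) * b y) / Sb x"
      unfolding tk by (rule sum_divide_distrib[symmetric])
    also have "\<dots> = 1" using Sbpos[of x] unfolding Sb_def by simp
    finally show "(\<Sum>y\<in>UNIV. tilt_kernel H k d y x) = 1" .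
  qed
  moreover have "stationary_dist (tilt_kernel H k d) r"
    unfolding stationary_dist_def
  proof
    fix y
    have "(\<Sum>x\<in>UNIV. tilt_kernel H k d y x * r x) = b y * (\<Sum>x\<in>UNIV. r x * exp (H x y) / Sb x)"
      unfolding tk sum_distrib_left by (rule sum.cong[OF refl]) (simp add: algebra_simps)
    also have "\<dots> = r y" using bG[of y] unfolding Sb_def .
    finally show "(\<Sum>x\<in>UNIV. tilt_kernel H k d y x * r x) = r y" .
  qed
  ultimately show ?thesis by blast
qed

theorem theorem1:
  fixes H :: "'x::finite \<Rightarrow> 'x \<Rightarrow> real" and r :: "'x \<Rightarrow> real"
  assumes "pos_distribution r"
  shows "\<exists>\<kappa> \<delta>. markov_kernel (tilt_kernel H \<kappa> \<delta>) \<and> stationary_dist (tilt_kernel H \<kappa> \<delta>) r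
           \<and> (\<forall>\<kappa>' \<delta>'. markov_kernel (tilt_kernel H \<kappa>' \<delta>') \<and> stationary_dist (tilt_kernel H \<kappa>' \<delta>') r
                 \<longrightarrow> \<delta>' = \<delta> \<and> (\<exists>c. \<forall>x. \<kappa>' x = \<kappa> x + c))"
proof -
  obtain k d where m: "markov_kernel (tilt_kernel H k d)" and s: "stationary_dist (tilt_kernel H k d) r"
    using exist[OF assms] by blast
  show ?thesis
    using m s uniq[OF assms m s] by blast
qed

end
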